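(* Let $F=\{T_1,\dots,T_n\}$ be a finite family of reduction operators relative to a well-ordered set $(G,<)$ and let $2\le i\le n$. Identifying $\mathrm{syz}(T_1,\dots,T_{i-1})$ with its image under $\iota_i:(v_1,\dots,v_{i-1})\mapsto(v_1,\dots,v_{i-1},0)$, we have the direct sum decomposition \[\mathrm{syz}(T_1,\dots,T_i)=\mathrm{im}(\iota_i)\oplus\mathbb{K}\{s_{i,g_0}\mid g_0\in\mathrm{red}(U_{i-1}\vee T_i)\},\] where $s_{i,g_0}$ is viewed in $\ker T_1\times\dots\times\ker T_i$.
   Context: Let $\mathbb{K}$ be a field, $(G,<)$ a well-ordered set and $\mathbb{K}G$ the vector space with basis $G$. For $v\neq 0$, $\mathrm{lt}(v)$ is the greatest element of $G$ appearing with nonzero coefficient in $v$. Extend $<$ to $\mathbb{K}G$: $u<v$ if $u=0$ and $v\neq0$, or if $\mathrm{lt}(u)<\mathrm{lt}(v)$; $u\le v$ means $u<v$ or $u=v$. A reduction operator is an idempotent linear endomorphism $T$ of $\mathbb{K}G$ with $T(g)\le g$ for all $g\in G$; $\mathrm{red}(T)=\{g\in G\mid T(g)\neq g\}$. The elements $g-T(g)$, $g\in\mathrm{red}(T)$, form a basis of $\ker T$; the expression of $v\in\ker T$ in this basis is its $T$-decomposition. For every subspace $V$ there is a unique reduction operator $\ker^{-1}(V)$ with kernel $V$; $T\wedge T'=\ker^{-1}(\ker T+\ker T')$, $T\vee T'=\ker^{-1}(\ker T\cap\ker T')$, and $T_1\wedge\dots\wedge T_k=\ker^{-1}(\sum\ker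 T_j)$. For a finite family $F'=\{T_1,\dots,T_k\}$: $\mathbf{ker}(F')=\ker T_1\times\dots\times\ker T_k$; $\pi_{F'}(v_1,\dots,v_k)=v_1+\dots+v_k$; $\mathrm{syz}(F')=\mathrm{syz}(T_1,\dots,T_k)=\ker\pi_{F'}$. For $g\in\mathrm{red}(T_j)$, $e_{j,g}$ is the tuple with $g-T_j(g)$ at position $j$ and $0$ elsewhere; these form a basis of $\mathbf{ker}(F')$, well-ordered by $e_{j,g}\sqsubset e_{j',g'}$ iff $j<j'$, or $j=j'$ and $g<g'$. The leading term of a nonzero element is the $\sqsubset$-greatest $e_{j,g}$ in its expansion; $\mathrm{lt}(\mathrm{syz}(F'))$ is the set of leading terms of nonzero syzygies. Every $v\in\ker(T_1\wedge\dots\wedge T_k)$ has a unique expression $v=\sum\lambda_{j,g}(g-T_j(g))$ over pairs with $g\in\mathrm{red}(T_j)$ and $e_{j,g}\notin\mathrm{lt}(\mathrm{syz}(F'))$: its canonical decomposition with respect to $F'$. $U_{i-1}=T_1\wedge\dots\wedge T_{i-1}$. For $g_0\in\mathrm{red}(U_{i-1}\vee T_i)$, $v_{i,g_0}=g_0-(U_{i-1}\vee T_i)(g_0)\in\ker U_{i-1}\cap\ker T_i$. With $\sum_{j,g'}\lambda_{j,g'}(g'-T_j(g'))$ its canonical decomposition with respect to $\{T_1,\dots,T_{i-1}\}$ and $\sum_g\lambda_g(g-T_i(g))$ its $T_i$-decomposition, $s_{i,g_0}=\sum_g\lambda_g e_{i,g}-\sum_{j,g'}\lambda_{j,g'}e_{j,g'}$.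 *)

theory Defs
  imports Main "HOL-Library.Function_Algebras"
begin

text \<open>Vectors of KG are finitely supported functions G => K; tuples of vectors
  are functions nat => (G => K), position j being the j-th component (1-based).\<close>

definition delta :: "'g \<Rightarrow> 'g \<Rightarrow> 'k::zero_neq_one" where
  "delta g = (\<lambda>h. if h = g then 1 else 0)"

definition supp :: "('g \<Rightarrow> 'k::zero) \<Rightarrow> 'g set" where
  "supp v = {g. v g \<noteq> 0}"

definition KG :: "('g \<Rightarrow> 'k::zero) set" where
  "KG = {v. finite (supp v)}"

definition smult :: "'k::times \<Rightarrow> ('g \<Rightarrow> 'k) \<Rightarrow> 'g \<Rightarrow> 'k" where
  "smult c v = (\<lambda>g. c * v g)"

definition lt :: "('g::wellorder \<Rightarrow> 'k::zero) \<Rightarrow> 'g" where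
  "lt v = Max (supp v)"

definition vless :: "('g::wellorder \<Rightarrow> 'k::zero) \<Rightarrow> ('g \<Rightarrow> 'k) \<Rightarrow> bool" where
  "vless u v \<longleftrightarrow> (u = 0 \<and> v \<noteq> 0) \<or> (u \<noteq> 0 \<and> v \<noteq> 0 \<and> lt u < lt v)"

definition vle :: "('g::wellorder \<Rightarrow> 'k::zero) \<Rightarrow> ('g \<Rightarrow> 'k) \<Rightarrow> bool" where
  "vle u v \<longleftrightarrow> vless u v \<or> u = v"

text \<open>Reduction operator: idempotent linear endomorphism of KG with T(g) <= g.
  Only its values on KG matter.\<close>
definition is_redop :: "(('g::wellorder \<Rightarrow> 'k::field) \<Rightarrow> ('g \<Rightarrow> 'k)) \<Rightarrow> bool" where
  "is_redop T \<longleftrightarrow>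
     (\<forall>v\<in>KG. T v \<in> KG) \<and>
     (\<forall>u\<in>KG. \<forall>v\<in>KG. T (u + v) = T u + T v) \<and>
     (\<forall>c. \<forall>v\<in>KG. T (smult c v) = smult c (T v)) \<and>
     (\<forall>v\<in>KG. T (T v) = T v) \<and>
     (\<forall>g. vle (T (delta g)) (delta g))"

definition kerop :: "(('g \<Rightarrow> 'k::field) \<Rightarrow> ('g \<Rightarrow> 'k)) \<Rightarrow> ('g \<Rightarrow> 'k) set" where
  "kerop T = {v \<in> KG. T v = 0}"

definition red :: "(('g \<Rightarrow> 'k::field) \<Rightarrow> ('g \<Rightarrow> 'k)) \<Rightarrow> 'g set" where
  "red T = {g. T (delta g) \<noteq> delta g}"

text \<open>Value at the basis element g of the unique reduction operator with kernel K,
  i.e. ker^{-1}(K)(g), and red(ker^{-1}(K)).\<close>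
definition kerinv_at :: "('g::wellorder \<Rightarrow> 'k::field) set \<Rightarrow> 'g \<Rightarrow> ('g \<Rightarrow> 'k)" where
  "kerinv_at K g = (THE w. \<exists>T. is_redop T \<and> kerop T = K \<and> w = T (delta g))"

definition kerinv_red :: "('g::wellorder \<Rightarrow> 'k::field) set \<Rightarrow> 'g set" where
  "kerinv_red K = {g. kerinv_at K g \<noteq> delta g}"

text \<open>ker T_1 + ... + ker T_k  (= ker (T_1 \<and> ... \<and> T_k)).\<close>
definition kersum :: "(nat \<Rightarrow> ('g \<Rightarrow> 'k::field) \<Rightarrow> ('g \<Rightarrow> 'k)) \<Rightarrow> nat \<Rightarrow> ('g \<Rightarrow> 'k) set" where
  "kersum Ts k = {(\<Sum>j\<in>{1..k}. w j) | w. \<forall>j\<in>{1..k}. w j \<in> kerop (Ts j)}"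

definition kertuples :: "(nat \<Rightarrow> ('g \<Rightarrow> 'k::field) \<Rightarrow> ('g \<Rightarrow> 'k)) \<Rightarrow> nat \<Rightarrow> (nat \<Rightarrow> 'g \<Rightarrow> 'k) set" where
  "kertuples Ts k = {w. (\<forall>j\<in>{1..k}. w j \<in> kerop (Ts j)) \<and> (\<forall>j. j \<notin> {1..k} \<longrightarrow> w j = 0)}"

definition syz :: "(nat \<Rightarrow> ('g \<Rightarrow> 'k::field) \<Rightarrow> ('g \<Rightarrow> 'k)) \<Rightarrow> nat \<Rightarrow> (nat \<Rightarrow> 'g \<Rightarrow> 'k) set" where
  "syz Ts k = {w \<in> kertuples Ts k. (\<Sum>j\<in>{1..k}. w j) = 0}"

definition tsmult :: "'k::times \<Rightarrow> (nat \<Rightarrow> 'g \<Rightarrow> 'k) \<Rightarrow> nat \<Rightarrow> 'g \<Rightarrow> 'k" where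
  "tsmult c w = (\<lambda>j. smult c (w j))"

definition ebas :: "(nat \<Rightarrow> ('g \<Rightarrow> 'k::field) \<Rightarrow> ('g \<Rightarrow> 'k)) \<Rightarrow> nat \<Rightarrow> 'g \<Rightarrow> (nat \<Rightarrow> 'g \<Rightarrow> 'k)" where
  "ebas Ts j g = (\<lambda>j'. if j' = j then delta g - Ts j (delta g) else 0)"

definition combo :: "(nat \<Rightarrow> ('g \<Rightarrow> 'k::field) \<Rightarrow> ('g \<Rightarrow> 'k)) \<Rightarrow> (nat \<times> 'g \<Rightarrow> 'k) \<Rightarrow> (nat \<Rightarrow> 'g \<Rightarrow> 'k)" where
  "combo Ts c = (\<Sum>p\<in>{p. c p \<noteq> 0}. tsmult (c p) (ebas Ts (fst p) (snd p)))"

definition valid_coeffs :: "(nat \<Rightarrow> ('g \<Rightarrow> 'k::field) \<Rightarrow> ('g \<Rightarrow> 'k)) \<Rightarrow> nat \<Rightarrow> (nat \<times> 'g \<Rightarrow> 'k) \<Rightarrow> bool" where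
  "valid_coeffs Ts k c \<longleftrightarrow> finite {p. c p \<noteq> 0} \<and>
     (\<forall>p. c p \<noteq> 0 \<longrightarrow> fst p \<in> {1..k} \<and> snd p \<in> red (Ts (fst p)))"

definition coeffs :: "(nat \<Rightarrow> ('g \<Rightarrow> 'k::field) \<Rightarrow> ('g \<Rightarrow> 'k)) \<Rightarrow> nat \<Rightarrow> (nat \<Rightarrow> 'g \<Rightarrow> 'k) \<Rightarrow> (nat \<times> 'g \<Rightarrow> 'k)" where
  "coeffs Ts k w = (THE c. valid_coeffs Ts k c \<and> combo Ts c = w)"

definition pless :: "nat \<times> 'g::wellorder \<Rightarrow> nat \<times> 'g \<Rightarrow> bool" where
  "pless p q \<longleftrightarrow> fst p < fst q \<or> (fst p = fst q \<and> snd p < snd q)"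

definition is_lead :: "(nat \<times> 'g::wellorder \<Rightarrow> 'k::zero) \<Rightarrow> nat \<times> 'g \<Rightarrow> bool" where
  "is_lead c p \<longleftrightarrow> c p \<noteq> 0 \<and> (\<forall>q. c q \<noteq> 0 \<longrightarrow> q = p \<or> pless q p)"

definition ltsyz :: "(nat \<Rightarrow> ('g::wellorder \<Rightarrow> 'k::field) \<Rightarrow> ('g \<Rightarrow> 'k)) \<Rightarrow> nat \<Rightarrow> (nat \<times> 'g) set" where
  "ltsyz Ts k = {p. \<exists>w\<in>syz Ts k. w \<noteq> 0 \<and> is_lead (coeffs Ts k w) p}"

definition candec :: "(nat \<Rightarrow> ('g::wellorder \<Rightarrow> 'k::field) \<Rightarrow> ('g \<Rightarrow> 'k)) \<Rightarrow> nat \<Rightarrow> ('g \<Rightarrow> 'k) \<Rightarrow> (nat \<times> 'g \<Rightarrow> 'k)" where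
  "candec Ts k v = (THE c. valid_coeffs Ts k c \<and> (\<forall>p. c p \<noteq> 0 \<longrightarrow> p \<notin> ltsyz Ts k) \<and>
      v = (\<Sum>p\<in>{p. c p \<noteq> 0}. smult (c p) (delta (snd p) - Ts (fst p) (delta (snd p)))))"

definition tdec :: "(('g \<Rightarrow> 'k::field) \<Rightarrow> ('g \<Rightarrow> 'k)) \<Rightarrow> ('g \<Rightarrow> 'k) \<Rightarrow> ('g \<Rightarrow> 'k)" where
  "tdec T v = (THE l. finite {g. l g \<noteq> 0} \<and> (\<forall>g. l g \<noteq> 0 \<longrightarrow> g \<in> red T) \<and>
      v = (\<Sum>g\<in>{g. l g \<noteq> 0}. smult (l g) (delta g - T (delta g))))"

text \<open>ker(U_{i-1}) \<inter> ker T_i, the kernel of U_{i-1} \<or> T_i.\<close>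
definition joinker :: "(nat \<Rightarrow> ('g::wellorder \<Rightarrow> 'k::field) \<Rightarrow> ('g \<Rightarrow> 'k)) \<Rightarrow> nat \<Rightarrow> ('g \<Rightarrow> 'k) set" where
  "joinker Ts i = kersum Ts (i - 1) \<inter> kerop (Ts i)"

definition vvec :: "(nat \<Rightarrow> ('g::wellorder \<Rightarrow> 'k::field) \<Rightarrow> ('g \<Rightarrow> 'k)) \<Rightarrow> nat \<Rightarrow> 'g \<Rightarrow> ('g \<Rightarrow> 'k)" where
  "vvec Ts i g0 = delta g0 - kerinv_at (joinker Ts i) g0"

definition svec :: "(nat \<Rightarrow> ('g::wellorder \<Rightarrow> 'k::field) \<Rightarrow> ('g \<Rightarrow> 'k)) \<Rightarrow> nat \<Rightarrow> 'g \<Rightarrow> (nat \<Rightarrow> 'g \<Rightarrow> 'k)" where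
  "svec Ts i g0 =
     (let v = vvec Ts i g0; l = tdec (Ts i) v; m = candec Ts (i - 1) v
      in combo Ts (\<lambda>p. if fst p = i then l (snd p) else - m p))"

definition tspan :: "(nat \<Rightarrow> 'g \<Rightarrow> 'k::field) set \<Rightarrow> (nat \<Rightarrow> 'g \<Rightarrow> 'k) set" where
  "tspan S = {(\<Sum>x\<in>A. tsmult (c x) x) | A c. finite A \<and> A \<subseteq> S}"

end

theory Submission
  imports Defs "HOL-Library.Product_Lexorder"
begin

lemma sum_app: "(\<Sum>a\<in>A. f a) x = (\<Sum>a\<in>A. f a x)"
  by (induction A rule: infinite_finite_induct) auto

lemma lam0[simp]: "(\<lambda>a. 0) = (0 :: 'a \<Rightarrow> 'b::zero)" by (simp add: zero_fun_def)

lemma smult_apply[simp]: "smult c v g = c * v g" by (simp add: smult_def)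
lemma delta_apply: "delta g h = (if h = g then 1 else 0)" by (simp add: delta_def)

lemma supp_delta[simp]: "supp (delta g :: 'g \<Rightarrow> 'k::zero_neq_one) = {g}"
  by (auto simp: supp_def delta_def)

lemma KG_iff: "v \<in> KG \<longleftrightarrow> finite (supp v)" by (simp add: KG_def)
lemma delta_KG[simp]: "(delta g :: 'g \<Rightarrow> 'k::zero_neq_one) \<in> KG" by (simp add: KG_iff)
lemma KG_zero[simp]: "(0::'g\<Rightarrow>'k::zero) \<in> KG" by (simp add: KG_iff supp_def)
lemma KG_add: "u\<in>KG \<Longrightarrow> v\<in>KG \<Longrightarrow> (u + v :: 'g \<Rightarrow> 'k::monoid_add) \<in> KG"
  unfolding KG_iff by (rule finite_subset[of _ "supp u \<union> supp v"]) (auto simp: supp_def)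
lemma KG_diff: "u\<in>KG \<Longrightarrow> v\<in>KG \<Longrightarrow> (u - v :: 'g \<Rightarrow> 'k::group_add) \<in> KG"
  unfolding KG_iff by (rule finite_subset[of _ "supp u \<union> supp v"]) (auto simp: supp_def)
lemma KG_uminus: "v\<in>KG \<Longrightarrow> (- v :: 'g \<Rightarrow> 'k::group_add) \<in> KG"
  unfolding KG_iff by (rule finite_subset[of _ "supp v"]) (auto simp: supp_def)
lemma KG_smult: "v\<in>KG \<Longrightarrow> (smult c v :: 'g \<Rightarrow> 'k::mult_zero) \<in> KG"
  unfolding KG_iff by (rule finite_subset[of _ "supp v"]) (auto simp: supp_def)
lemma KG_sum: "(\<And>a. a\<in>A \<Longrightarrow> f a \<in> KG) \<Longrightarrow> (sum f A :: 'g \<Rightarrow> 'k::comm_monoid_add) \<in> KG"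
  by (induction A rule: infinite_finite_induct) (auto intro: KG_add)

lemma redop_KG: "is_redop T \<Longrightarrow> v\<in>KG \<Longrightarrow> T v \<in> KG" by (simp add: is_redop_def)
lemma redop_add: "is_redop T \<Longrightarrow> u\<in>KG \<Longrightarrow> v\<in>KG \<Longrightarrow> T (u + v) = T u + T v" by (simp add: is_redop_def)
lemma redop_smult: "is_redop T \<Longrightarrow> v\<in>KG \<Longrightarrow> T (smult c v) = smult c (T v)" by (simp add: is_redop_def)
lemma redop_idem: "is_redop T \<Longrightarrow> v\<in>KG \<Longrightarrow> T (T v) = T v" by (simp add: is_redop_def)
lemma redop_le: "is_redop T \<Longrightarrow> vle (T (delta g)) (delta g)" by (simp add: is_redop_def)

lemma redop_zero: "is_redop T \<Longrightarrow> T 0 = 0"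
  using redop_add[of T 0 0] by simp

lemma smult_m1: "smult (-1) v = - (v :: 'g \<Rightarrow> 'k::ring_1)"
  by (rule ext) simp

lemma redop_uminus: "is_redop T \<Longrightarrow> v\<in>KG \<Longrightarrow> T (- v) = - T v"
  using redop_smult[of T v "-1"] by (simp add: smult_m1)

lemma redop_diff: "is_redop T \<Longrightarrow> u\<in>KG \<Longrightarrow> v\<in>KG \<Longrightarrow> T (u - v) = T u - T v"
  using redop_add[of T u "- v"] redop_uminus[of T v] by (simp add: KG_uminus)

lemma redop_sum: "is_redop T \<Longrightarrow> (\<And>a. a\<in>A \<Longrightarrow> f a \<in> KG) \<Longrightarrow> T (sum f A) = (\<Sum>a\<in>A. T (f a))"
proof (induction A rule: infinite_finite_induct)
  case (infinite A) then show ?case by (metis sum.infinite redop_zero)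
next
  case empty then show ?case by (metis sum.empty redop_zero)
next
  case (insert x F)
  have a: "f x \<in> KG" "sum f F \<in> KG" using insert.prems by (auto intro: KG_sum)
  have "T (sum f F) = (\<Sum>a\<in>F. T (f a))" using insert.IH insert.prems by blast
  then show ?case
    by (simp only: sum.insert[OF insert.hyps] redop_add[OF insert.prems(1) a])
qed

definition bvec :: "(('g \<Rightarrow> 'k::field) \<Rightarrow> ('g\<Rightarrow>'k)) \<Rightarrow> 'g \<Rightarrow> 'g \<Rightarrow> 'k" where
  "bvec T g = delta g - T (delta g)"

lemma expand_KG: "v \<in> KG \<Longrightarrow> (\<Sum>h\<in>supp v. smult (v h) (delta h)) = (v :: 'g \<Rightarrow> 'k::comm_ring_1)"
proof (rule ext)
  fix g assume "v \<in> KG"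
  have "(\<Sum>h\<in>supp v. smult (v h) (delta h)) g = (\<Sum>h\<in>supp v. if g = h then v h else 0)"
    by (auto simp: sum_app delta_apply intro!: sum.cong)
  also have "\<dots> = v g" using \<open>v \<in> KG\<close> by (simp add: KG_iff supp_def)
  finally show "(\<Sum>h\<in>supp v. smult (v h) (delta h)) g = v g" .
qed

lemma redop_expand: "is_redop T \<Longrightarrow> v\<in>KG \<Longrightarrow> T v = (\<Sum>h\<in>supp v. smult (v h) (T (delta h)))"
proof -
  assume r: "is_redop T" and v: "v \<in> KG"
  have "T v = T (\<Sum>h\<in>supp v. smult (v h) (delta h))" using expand_KG[OF v] by simp
  also have "\<dots> = (\<Sum>h\<in>supp v. T (smult (v h) (delta h)))"
    by (rule redop_sum[OF r]) (simp add: KG_smult)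
  also have "\<dots> = (\<Sum>h\<in>supp v. smult (v h) (T (delta h)))"
    by (simp add: redop_smult[OF r])
  finally show ?thesis .
qed

lemma smult_diff_right: "smult c (u - v) = smult c u - smult c (v :: 'g \<Rightarrow> 'k::ring)"
  by (rule ext) (simp add: algebra_simps)

lemma L2: assumes r: "is_redop T" and v: "v \<in> KG"
  shows "v - T v = (\<Sum>h\<in>supp v \<inter> red T. smult (v h) (bvec T h))"
proof -
  have fin: "finite (supp v)" using v by (simp add: KG_iff)
  have "v - T v = (\<Sum>h\<in>supp v. smult (v h) (delta h)) - (\<Sum>h\<in>supp v. smult (v h) (T (delta h)))"
    using expand_KG[OF v] redop_expand[OF r v] by simp
  also have "\<dots> = (\<Sum>h\<in>supp v. smult (v h) (bvec T h))"
    by (simp add: sum_subtractf[symmetric] bvec_def smult_diff_right)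
  also have "\<dots> = (\<Sum>h\<in>supp v. if h \<in> red T then smult (v h) (bvec T h) else 0)"
    by (rule sum.cong) (auto simp: red_def bvec_def)
  also have "\<dots> = (\<Sum>h\<in>supp v \<inter> red T. smult (v h) (bvec T h))"
    by (simp add: sum.inter_restrict[OF fin])
  finally show ?thesis .
qed


lemma le_lt: "v \<in> KG \<Longrightarrow> v h \<noteq> 0 \<Longrightarrow> h \<le> lt v"
  unfolding lt_def KG_iff by (rule Max_ge) (auto simp: supp_def)

lemma lt_in_supp: "v \<in> KG \<Longrightarrow> v \<noteq> 0 \<Longrightarrow> v (lt v) \<noteq> 0"
proof -
  assume "v \<in> KG" "v \<noteq> 0"
  then have "supp v \<noteq> {}" "finite (supp v)" by (auto simp: supp_def KG_iff fun_eq_iff)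
  then have "Max (supp v) \<in> supp v" by (rule Max_in[rotated])
  then show ?thesis by (simp add: lt_def supp_def)
qed

lemma lt_delta[simp]: "lt (delta g :: 'g::wellorder \<Rightarrow> 'k::zero_neq_one) = g"
  by (simp add: lt_def)

lemma delta_nz[simp]: "(delta g :: 'g \<Rightarrow> 'k::zero_neq_one) \<noteq> 0"
  by (auto simp: delta_def fun_eq_iff)

lemma L3:
  assumes r: "is_redop T"
  shows "k < h \<Longrightarrow> T (delta k) h = 0" and "k \<in> red T \<Longrightarrow> T (delta k) k = 0"
proof -
  let ?w = "T (delta k)"
  have w: "?w \<in> KG" by (rule redop_KG[OF r]) simp
  have le: "vle ?w (delta k)" by (rule redop_le[OF r])
  have c: "?w = delta k \<or> ?w = 0 \<or> (?w \<noteq> 0 \<and> lt ?w < k)"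
    using le by (auto simp: vle_def vless_def)
  show "k < h \<Longrightarrow> ?w h = 0"
    using c le_lt[OF w, of h] by (auto simp: delta_apply)
  show "k \<in> red T \<Longrightarrow> ?w k = 0"
    using c le_lt[OF w, of k] by (auto simp: red_def)
qed

lemma bvec_above: "is_redop T \<Longrightarrow> g < h \<Longrightarrow> bvec T g h = 0"
  by (simp add: bvec_def L3 delta_apply)

lemma bvec_self: "is_redop T \<Longrightarrow> g \<in> red T \<Longrightarrow> bvec T g g = 1"
  by (simp add: bvec_def L3 delta_apply)

lemma IMG:
  assumes r: "is_redop T" and x: "x \<in> KG" and h: "h \<in> red T"
  shows "T x h = 0"
proof (rule ccontr)
  assume hn: "T x h \<noteq> 0"
  let ?y = "T x"
  have y: "?y \<in> KG" using redop_KG[OF r x] .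
  have yy: "T ?y = ?y" using redop_idem[OF r x] .
  let ?S = "supp ?y \<inter> red T"
  have fin: "finite ?S" using y by (auto simp: KG_iff)
  have ne: "?S \<noteq> {}" using hn h by (auto simp: supp_def)
  define m where "m = Max ?S"
  have m: "m \<in> ?S" unfolding m_def using fin ne by (rule Max_in)
  have mx: "\<And>g. g \<in> ?S \<Longrightarrow> g \<le> m" unfolding m_def using fin by simp
  have "0 = ?y - T ?y" using yy by simp
  also have "\<dots> = (\<Sum>g\<in>?S. smult (?y g) (bvec T g))" by (rule L2[OF r y])
  finally have "0 = (\<Sum>g\<in>?S. smult (?y g) (bvec T g)) m" by simp
  also have "\<dots> = (\<Sum>g\<in>?S. if g = m then ?y m else 0)"
    unfolding sum_app
  proof (rule sum.cong)
    fix g assume g: "g \<in> ?S"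
    show "smult (?y g) (bvec T g) m = (if g = m then ?y m else 0)"
    proof (cases "g = m")
      case True then show ?thesis using bvec_self[OF r] g by simp
    next
      case False then have "g < m" using mx[OF g] by simp
      then show ?thesis using bvec_above[OF r] False by simp
    qed
  qed simp
  also have "\<dots> = ?y m" using fin m by simp
  finally show False using m by (simp add: supp_def)
qed

lemma bvec_at: "is_redop T \<Longrightarrow> h \<in> red T \<Longrightarrow> bvec T g h = delta g h"
  by (simp add: bvec_def IMG)

lemma EVT:
  assumes r: "is_redop T" and fin: "finite S" and h: "h \<in> red T"
  shows "(\<Sum>g\<in>S. smult (l g) (bvec T g)) h = (if h \<in> S then l h else 0)"
proof -
  have "(\<Sum>g\<in>S. smult (l g) (bvec T g)) h = (\<Sum>g\<in>S. if h = g then l g else 0)"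
    unfolding sum_app by (rule sum.cong) (auto simp: bvec_at[OF r h] delta_apply)
  also have "\<dots> = (if h \<in> S then l h else 0)" using fin by simp
  finally show ?thesis .
qed

lemma bvec_KG: "is_redop T \<Longrightarrow> bvec T g \<in> KG"
  by (simp add: bvec_def KG_diff redop_KG)

lemma bvec_ker: "is_redop T \<Longrightarrow> bvec T g \<in> kerop T"
  unfolding kerop_def using bvec_KG[of T g]
  by (simp add: bvec_def redop_diff redop_KG redop_idem)

lemma kerop_KG: "v \<in> kerop T \<Longrightarrow> v \<in> KG" by (simp add: kerop_def)
lemma kerop_zero: "is_redop T \<Longrightarrow> 0 \<in> kerop T" by (simp add: kerop_def redop_zero)
lemma kerop_add: "is_redop T \<Longrightarrow> u \<in> kerop T \<Longrightarrow> v \<in> kerop T \<Longrightarrow> u + v \<in> kerop T"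
  by (simp add: kerop_def redop_add KG_add)
lemma kerop_smult: "is_redop T \<Longrightarrow> v \<in> kerop T \<Longrightarrow> smult c v \<in> kerop T"
  by (auto simp: kerop_def redop_smult KG_smult)
lemma kerop_diff: "is_redop T \<Longrightarrow> u \<in> kerop T \<Longrightarrow> v \<in> kerop T \<Longrightarrow> u - v \<in> kerop T"
  by (simp add: kerop_def redop_diff KG_diff)
lemma kerop_uminus: "is_redop T \<Longrightarrow> v \<in> kerop T \<Longrightarrow> - v \<in> kerop T"
  by (simp add: kerop_def redop_uminus KG_uminus)
lemma kerop_sum: "is_redop T \<Longrightarrow> (\<And>a. a \<in> A \<Longrightarrow> f a \<in> kerop T) \<Longrightarrow> sum f A \<in> kerop T"
  by (induction A rule: infinite_finite_induct) (auto intro: kerop_add kerop_zero)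

lemma ker_expand: "is_redop T \<Longrightarrow> v \<in> kerop T \<Longrightarrow> v = (\<Sum>h\<in>supp v \<inter> red T. smult (v h) (bvec T h))"
  using L2[of T v] by (simp add: kerop_def)

lemma L5:
  assumes r: "is_redop T" and v: "v \<in> kerop T" and nz: "v \<noteq> 0"
  shows "lt v \<in> red T"
proof -
  let ?S = "supp v \<inter> red T"
  have vK: "v \<in> KG" using v by (simp add: kerop_def)
  have fin: "finite ?S" using vK by (auto simp: KG_iff)
  have ex: "v = (\<Sum>h\<in>?S. smult (v h) (bvec T h))" by (rule ker_expand[OF r v])
  have ne: "?S \<noteq> {}" using ex nz by auto
  define m where "m = Max ?S"
  have m: "m \<in> ?S" unfolding m_def using fin ne by (rule Max_in)
  have mx: "\<And>g. g \<in> ?S \<Longrightarrow> g \<le> m" unfolding m_def using fin by simp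
  have above: "v g = 0" if "m < g" for g
  proof -
    have "v g = (\<Sum>h\<in>?S. smult (v h) (bvec T h)) g" using ex by (metis)
    also have "\<dots> = 0" unfolding sum_app
      by (rule sum.neutral) (use that mx bvec_above[OF r] in \<open>auto intro: le_less_trans\<close>)
    finally show ?thesis .
  qed
  have "lt v \<le> m" using lt_in_supp[OF vK nz] above by (metis not_le)
  moreover have "m \<le> lt v" using le_lt[OF vK] m by (simp add: supp_def)
  ultimately show ?thesis using m by simp
qed


lemma reduce_gen:
  fixes bad :: "'b \<Rightarrow> 'a::wellorder set"
  assumes fin: "\<And>x. P x \<Longrightarrow> finite (bad x)"
    and step: "\<And>x p. P x \<Longrightarrow> p \<in> bad x \<Longrightarrow> (\<forall>q\<in>bad x. q \<le> p) \<Longrightarrow> \<exists>x'. P x' \<and> R x' x \<and> (\<forall>q\<in>bad x'. q < p)"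
    and refl: "\<And>x. R x x" and trans: "\<And>x y z. R x y \<Longrightarrow> R y z \<Longrightarrow> R x z"
    and px: "P x"
  shows "\<exists>x'. P x' \<and> R x' x \<and> bad x' = {}"
proof -
  have main: "\<forall>x. P x \<and> (\<forall>q\<in>bad x. q \<le> b) \<longrightarrow> (\<exists>x'. P x' \<and> R x' x \<and> bad x' = {})" for b
  proof (induction b rule: less_induct)
    case (less b)
    show ?case
    proof (intro allI impI)
      fix x assume x: "P x \<and> (\<forall>q\<in>bad x. q \<le> b)"
      show "\<exists>x'. P x' \<and> R x' x \<and> bad x' = {}"
      proof (cases "bad x = {}")
        case True then show ?thesis using x refl by blast
      next
        case False
        define p where "p = Max (bad x)"
        have p: "p \<in> bad x" "\<forall>q\<in>bad x. q \<le> p" using fin[of x] x False by (auto simp: p_def)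
        have pb: "p \<le> b" using x p by blast
        show ?thesis
        proof (cases "p < b")
          case True then show ?thesis using less.IH[of p] x p by blast
        next
          case False
          obtain x' where x': "P x'" "R x' x" "\<forall>q\<in>bad x'. q < p" using step[of x p] x p by blast
          show ?thesis
          proof (cases "bad x' = {}")
            case True then show ?thesis using x' by blast
          next
            case False
            define p' where "p' = Max (bad x')"
            have p': "p' \<in> bad x'" "\<forall>q\<in>bad x'. q \<le> p'" using fin[of x'] x' False by (auto simp: p'_def)
            then have "p' < b" using x' pb \<open>\<not> p < b\<close> by auto
            then obtain x'' where "P x''" "R x'' x'" "bad x'' = {}" using less.IH[of p'] x' p' by blast
            then show ?thesis using x' trans by blast
          qed
        qed
      qed
    qed
  qed
  show ?thesis
  proof (cases "bad x = {}")
    case True then show ?thesis using px refl by blast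
  next
    case False then show ?thesis using main[of "Max (bad x)"] fin px by auto
  qed
qed

definition subsp :: "('g \<Rightarrow> 'k::field) set \<Rightarrow> bool" where
  "subsp V \<longleftrightarrow> V \<subseteq> KG \<and> 0 \<in> V \<and> (\<forall>u\<in>V. \<forall>v\<in>V. u + v \<in> V) \<and> (\<forall>c. \<forall>v\<in>V. smult c v \<in> V)"

lemma subsp_diff: "subsp V \<Longrightarrow> u\<in>V \<Longrightarrow> v \<in> V \<Longrightarrow> u - v \<in> V"
  unfolding subsp_def using smult_m1[of v] by (metis diff_conv_add_uminus)

definition ltset :: "('g::wellorder \<Rightarrow> 'k::field) set \<Rightarrow> 'g set" where
  "ltset V = {lt v | v. v \<in> V \<and> v \<noteq> 0}"

definition isnf :: "('g::wellorder \<Rightarrow> 'k::field) set \<Rightarrow> ('g \<Rightarrow> 'k) \<Rightarrow> ('g \<Rightarrow> 'k) \<Rightarrow> bool" where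
  "isnf V x w \<longleftrightarrow> w \<in> KG \<and> x - w \<in> V \<and> supp w \<inter> ltset V = {}"

lemma nf_exists:
  fixes V :: "('g::wellorder \<Rightarrow> 'k::field) set"
  assumes V: "subsp V" and x: "x \<in> KG"
  shows "\<exists>w. isnf V x w"
proof -
  have "\<exists>x'. x' \<in> KG \<and> x - x' \<in> V \<and> supp x' \<inter> ltset V = {}"
  proof (rule reduce_gen[where P="\<lambda>x::'g \<Rightarrow> 'k. x \<in> KG" and R="\<lambda>x' x. x - x' \<in> V" and bad="\<lambda>x. supp x \<inter> ltset V"])
    show "\<And>x. x \<in> KG \<Longrightarrow> finite (supp x \<inter> ltset V)" by (auto simp: KG_iff)
    show "\<And>x. x - x \<in> V" using V by (simp add: subsp_def)
    show "\<And>x y z. y - x \<in> V \<Longrightarrow> z - y \<in> V \<Longrightarrow> z - x \<in> V"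
    proof -
      fix x y z assume "y - x \<in> V" "z - y \<in> V"
      then have "(z - y) + (y - x) \<in> V" using V unfolding subsp_def by blast
      then show "z - x \<in> V" by simp
    qed
    show "x \<in> KG" by (rule x)
    fix x :: "'g \<Rightarrow> 'k" and p assume xK: "x \<in> KG" and p: "p \<in> supp x \<inter> ltset V" and mx: "\<forall>q\<in>supp x \<inter> ltset V. q \<le> p"
    obtain v where v: "v \<in> V" "v \<noteq> 0" "lt v = p" using p by (auto simp: ltset_def)
    have vK: "v \<in> KG" using v V by (auto simp: subsp_def)
    have vp: "v p \<noteq> 0" using lt_in_supp[OF vK v(2)] v(3) by simp
    define a where "a = x p / v p"
    define x' where "x' = x - smult a v"
    have x'K: "x' \<in> KG" unfolding x'_def using xK vK by (simp add: KG_diff KG_smult)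
    have "x - x' = smult a v" by (simp add: x'_def)
    then have R: "x - x' \<in> V" using V v by (simp add: subsp_def)
    have "\<forall>q\<in>supp x' \<inter> ltset V. q < p"
    proof
      fix q assume q: "q \<in> supp x' \<inter> ltset V"
      show "q < p"
      proof (rule ccontr)
        assume "\<not> q < p"
        then consider "q = p" | "p < q" by fastforce
        then show False
        proof cases
          case 1 then show False using q vp by (simp add: x'_def supp_def a_def)
        next
          case 2
          have "v q = 0" using le_lt[OF vK, of q] 2 v(3) by fastforce
          then have "x q \<noteq> 0" using q by (simp add: x'_def supp_def)
          then have "q \<le> p" using mx q by (simp add: supp_def)
          then show False using 2 by simp
        qed
      qed
    qed
    then show "\<exists>x'. x' \<in> KG \<and> x - x' \<in> V \<and> (\<forall>q\<in>supp x' \<inter> ltset V. q < p)"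
      using x'K R by blast
  qed
  then show ?thesis by (auto simp: isnf_def)
qed

lemma nf_unique:
  assumes V: "subsp V" and w1: "isnf V x w1" and w2: "isnf V x w2"
  shows "w1 = w2"
proof (rule ccontr)
  assume ne: "w1 \<noteq> w2"
  let ?d = "w1 - w2"
  have "(x - w2) - (x - w1) \<in> V" using subsp_diff[OF V, of "x - w2" "x - w1"] w1 w2 by (simp add: isnf_def)
  moreover have "(x - w2) - (x - w1) = ?d" by (simp add: algebra_simps)
  ultimately have dV: "?d \<in> V" by simp
  have dK: "?d \<in> KG" using w1 w2 by (simp add: isnf_def KG_diff)
  have dn: "?d \<noteq> 0" using ne by simp
  have ltd: "lt ?d \<in> ltset V" using dV dn by (auto simp: ltset_def)
  have "?d (lt ?d) \<noteq> 0" by (rule lt_in_supp[OF dK dn])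
  then have "w1 (lt ?d) \<noteq> 0 \<or> w2 (lt ?d) \<noteq> 0" by auto
  then show False using ltd w1 w2 unfolding isnf_def supp_def by blast
qed

definition nfop :: "('g::wellorder \<Rightarrow> 'k::field) set \<Rightarrow> ('g \<Rightarrow> 'k) \<Rightarrow> ('g \<Rightarrow> 'k)" where
  "nfop V x = (SOME w. isnf V x w)"

lemma nfop: assumes "subsp V" "x \<in> KG" shows "isnf V x (nfop V x)"
  using nf_exists[OF assms] unfolding nfop_def by (rule someI_ex)

lemma nfop_eq: "subsp V \<Longrightarrow> x \<in> KG \<Longrightarrow> isnf V x w \<Longrightarrow> nfop V x = w"
  using nfop nf_unique by blast

lemma nfop_vle:
  assumes V: "subsp V"
  shows "vle (nfop V (delta g)) (delta g)"
proof (cases "nfop V (delta g) = delta g")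
  case True then show ?thesis by (simp add: vle_def)
next
  case False
  let ?w = "nfop V (delta g)"
  have nf: "isnf V (delta g) ?w" using nfop[OF V] by simp
  let ?d = "delta g - ?w"
  have wK: "?w \<in> KG" using nf by (simp add: isnf_def)
  have dV: "?d \<in> V" using nf by (simp add: isnf_def)
  have dK: "?d \<in> KG" using wK by (simp add: KG_diff)
  have dn: "?d \<noteq> 0" using False by simp
  have ltd: "lt ?d \<in> ltset V" using dV dn by (auto simp: ltset_def)
  have dlt: "?d (lt ?d) \<noteq> 0" by (rule lt_in_supp[OF dK dn])
  have wl: "?w (lt ?d) = 0" using nf ltd by (auto simp: isnf_def supp_def)
  then have "lt ?d = g" using dlt by (auto simp: delta_apply split: if_splits)
  then have wg: "?w g = 0" using wl by simp
  show ?thesis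
  proof (cases "?w = 0")
    case True then show ?thesis by (simp add: vle_def vless_def)
  next
    case wn: False
    have wlt: "?w (lt ?w) \<noteq> 0" by (rule lt_in_supp[OF wK wn])
    then have "lt ?w \<noteq> g" using wg by auto
    moreover have "\<not> g < lt ?w"
    proof
      assume gl: "g < lt ?w"
      then have "?d (lt ?w) \<noteq> 0" using wlt by (auto simp: delta_apply)
      then have "lt ?w \<le> lt ?d" by (rule le_lt[OF dK])
      then show False using gl \<open>lt ?d = g\<close> by simp
    qed
    ultimately have "lt ?w < g" by simp
    then show ?thesis using wn by (simp add: vle_def vless_def)
  qed
qed

lemma nfop_redop:
  assumes V: "subsp V"
  shows "is_redop (nfop V)"
  unfolding is_redop_def
proof (intro conjI ballI allI)
  fix v :: "'a \<Rightarrow> 'b" assume v: "v \<in> KG"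
  show "nfop V v \<in> KG" using nfop[OF V v] by (simp add: isnf_def)
  show "nfop V (nfop V v) = nfop V v"
    using nfop[OF V v] V by (intro nfop_eq) (auto simp: isnf_def subsp_def)
  fix c
  show "nfop V (smult c v) = smult c (nfop V v)"
  proof (rule nfop_eq[OF V])
    show "smult c v \<in> KG" using v by (simp add: KG_smult)
    have nf: "isnf V v (nfop V v)" by (rule nfop[OF V v])
    have "smult c v - smult c (nfop V v) = smult c (v - nfop V v)" by (simp add: smult_diff_right)
    then show "isnf V (smult c v) (smult c (nfop V v))"
      using nf V by (auto simp: isnf_def subsp_def KG_smult supp_def)
  qed
next
  fix u v :: "'a \<Rightarrow> 'b" assume u: "u \<in> KG" and v: "v \<in> KG"
  show "nfop V (u + v) = nfop V u + nfop V v"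
  proof (rule nfop_eq[OF V])
    show "u + v \<in> KG" using u v by (simp add: KG_add)
    have nu: "isnf V u (nfop V u)" by (rule nfop[OF V u])
    have nv: "isnf V v (nfop V v)" by (rule nfop[OF V v])
    have e: "u + v - (nfop V u + nfop V v) = (u - nfop V u) + (v - nfop V v)" by simp
    have "supp (nfop V u + nfop V v) \<subseteq> supp (nfop V u) \<union> supp (nfop V v)" by (auto simp: supp_def)
    moreover have "(u - nfop V u) + (v - nfop V v) \<in> V" using nu nv V unfolding isnf_def subsp_def by blast
    then have "u + v - (nfop V u + nfop V v) \<in> V" by (simp only: e)
    ultimately show "isnf V (u + v) (nfop V u + nfop V v)"
      using nu nv by (auto simp: isnf_def KG_add)
  qed
next
  fix g show "vle (nfop V (delta g)) (delta g)" by (rule nfop_vle[OF V])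
qed

lemma nfop_ker:
  assumes V: "subsp V"
  shows "kerop (nfop V) = V"
proof
  show "kerop (nfop V) \<subseteq> V"
  proof
    fix v assume "v \<in> kerop (nfop V)"
    then have "v \<in> KG" "nfop V v = 0" by (auto simp: kerop_def)
    then show "v \<in> V" using nfop[OF V, of v] by (simp add: isnf_def)
  qed
  show "V \<subseteq> kerop (nfop V)"
  proof
    fix v assume vV: "v \<in> V"
    then have vK: "v \<in> KG" using V by (auto simp: subsp_def)
    have "isnf V v 0" using vV by (simp add: isnf_def supp_def)
    then have "nfop V v = 0" by (rule nfop_eq[OF V vK])
    then show "v \<in> kerop (nfop V)" using vK by (simp add: kerop_def)
  qed
qed

lemma red_sub:
  assumes r1: "is_redop U1" and r2: "is_redop U2" and k: "kerop U1 = kerop U2" and h: "h \<in> red U1"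
  shows "h \<in> red U2"
proof -
  let ?x = "bvec U1 h"
  have xk: "?x \<in> kerop U2" using bvec_ker[OF r1] k by simp
  have xK: "?x \<in> KG" by (rule bvec_KG[OF r1])
  have xh: "?x h = 1" by (rule bvec_self[OF r1 h])
  then have xn: "?x \<noteq> 0" by auto
  have "lt ?x = h"
  proof -
    have "h \<le> lt ?x" using le_lt[OF xK, of h] xh by simp
    moreover have "\<not> h < lt ?x" using lt_in_supp[OF xK xn] bvec_above[OF r1, of h "lt ?x"] by auto
    ultimately show ?thesis by simp
  qed
  then show ?thesis using L5[OF r2 xk xn] by simp
qed

lemma redop_unique:
  assumes r1: "is_redop U1" and r2: "is_redop U2" and k: "kerop U1 = kerop U2"
  shows "U1 (delta g) = U2 (delta g)"
proof -
  have rr: "red U1 = red U2" using red_sub[OF r1 r2 k] red_sub[OF r2 r1 k[symmetric]] by blast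
  let ?d = "U1 (delta g) - U2 (delta g)"
  have "bvec U2 g - bvec U1 g \<in> kerop U2"
    using bvec_ker[OF r1, of g] bvec_ker[OF r2, of g] k kerop_diff[OF r2] by metis
  then have "bvec U2 g - bvec U1 g \<in> kerop U1" using k by simp
  then have dk: "?d \<in> kerop U1" by (simp add: bvec_def)
  have "?d = (\<Sum>h\<in>supp ?d \<inter> red U1. smult (?d h) (bvec U1 h))" by (rule ker_expand[OF r1 dk])
  also have "supp ?d \<inter> red U1 = {}"
    using IMG[OF r1, of "delta g"] IMG[OF r2, of "delta g"] rr by (auto simp: supp_def)
  finally have d0: "?d = 0" by (simp only: sum.empty)
  then show ?thesis by (metis right_minus_eq)
qed

lemma kerinv_at_eq: "is_redop U \<Longrightarrow> kerop U = K \<Longrightarrow> kerinv_at K g = U (delta g)"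
  unfolding kerinv_at_def by (rule the_equality) (auto intro: redop_unique)

lemma kerinv_red_eq: "is_redop U \<Longrightarrow> kerop U = K \<Longrightarrow> kerinv_red K = red U"
  by (simp add: kerinv_red_def red_def kerinv_at_eq)


definition E :: "(nat \<Rightarrow> ('g \<Rightarrow> 'k::field) \<Rightarrow> ('g \<Rightarrow> 'k)) \<Rightarrow> nat \<times> 'g \<Rightarrow> 'g \<Rightarrow> 'k" where
  "E Ts p = bvec (Ts (fst p)) (snd p)"

definition lsum :: "(nat \<Rightarrow> ('g \<Rightarrow> 'k::field) \<Rightarrow> ('g \<Rightarrow> 'k)) \<Rightarrow> (nat \<times> 'g) set \<Rightarrow> (nat \<times> 'g \<Rightarrow> 'k) \<Rightarrow> 'g \<Rightarrow> 'k" where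
  "lsum Ts S c = (\<Sum>q\<in>S. smult (c q) (E Ts q))"

definition csupp :: "(nat \<times> 'g \<Rightarrow> 'k::zero) \<Rightarrow> (nat \<times> 'g) set" where
  "csupp c = {p. c p \<noteq> 0}"

definition cr :: "nat \<Rightarrow> (nat \<times> 'g \<Rightarrow> 'k::zero) \<Rightarrow> nat \<times> 'g \<Rightarrow> 'k" where
  "cr j c = (\<lambda>q. if fst q = j then c q else 0)"

definition RK :: "(nat \<Rightarrow> ('g::wellorder \<Rightarrow> 'k::field) \<Rightarrow> ('g \<Rightarrow> 'k)) \<Rightarrow> nat \<Rightarrow> bool" where
  "RK Ts k \<longleftrightarrow> (\<forall>j\<in>{1..k}. is_redop (Ts j))"

lemma smult_0[simp]: "smult 0 v = (0 :: 'g \<Rightarrow> 'k::mult_zero)"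
  by (rule ext) simp

lemma lsum_super: "finite S \<Longrightarrow> csupp c \<subseteq> S \<Longrightarrow> lsum Ts (csupp c) c = lsum Ts S c"
  unfolding lsum_def by (rule sum.mono_neutral_left) (auto simp: csupp_def)

lemma lsum_diff: "lsum Ts S (\<lambda>q. c q - d q) = lsum Ts S c - lsum Ts S d"
  unfolding lsum_def by (rule ext) (simp add: sum_app left_diff_distrib sum_subtractf)

lemma lsum_mult: "lsum Ts S (\<lambda>q. a * c q) = smult a (lsum Ts S c)"
  unfolding lsum_def by (rule ext) (simp add: sum_app sum_distrib_left mult.assoc)

lemma valid_fin: "valid_coeffs Ts k c \<Longrightarrow> finite (csupp c)"
  by (simp add: valid_coeffs_def csupp_def)

lemma valid_in: "valid_coeffs Ts k c \<Longrightarrow> c q \<noteq> 0 \<Longrightarrow> fst q \<in> {1..k} \<and> snd q \<in> red (Ts (fst q))"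
  unfolding valid_coeffs_def by blast

lemma combo_app: "combo Ts c j = lsum Ts (csupp c) (cr j c)"
proof (rule ext)
  fix x show "combo Ts c j x = lsum Ts (csupp c) (cr j c) x"
    unfolding combo_def lsum_def csupp_def sum_app
    by (rule sum.cong) (auto simp: tsmult_def ebas_def cr_def E_def bvec_def)
qed

lemma combo_total:
  assumes v: "valid_coeffs Ts k c"
  shows "(\<Sum>j\<in>{1..k}. combo Ts c j) = lsum Ts (csupp c) c"
proof -
  have "(\<Sum>j\<in>{1..k}. combo Ts c j) = (\<Sum>j\<in>{1..k}. \<Sum>q\<in>csupp c. smult (cr j c q) (E Ts q))"
    by (simp add: combo_app lsum_def)
  also have "\<dots> = (\<Sum>q\<in>csupp c. \<Sum>j\<in>{1..k}. smult (cr j c q) (E Ts q))"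
    by (rule sum.swap)
  also have "\<dots> = (\<Sum>q\<in>csupp c. smult (c q) (E Ts q))"
  proof (rule sum.cong)
    fix q assume q: "q \<in> csupp c"
    then have fq: "fst q \<in> {1..k}" using valid_in[OF v] by (simp add: csupp_def)
    have "(\<Sum>j\<in>{1..k}. smult (cr j c q) (E Ts q)) = (\<Sum>j\<in>{1..k}. if fst q = j then smult (c q) (E Ts q) else 0)"
      by (rule sum.cong) (auto simp: cr_def)
    also have "\<dots> = smult (c q) (E Ts q)" using fq by simp
    finally show "(\<Sum>j\<in>{1..k}. smult (cr j c q) (E Ts q)) = smult (c q) (E Ts q)" .
  qed simp
  finally show ?thesis by (simp add: lsum_def)
qed

lemma E_ker: "is_redop (Ts (fst q)) \<Longrightarrow> E Ts q \<in> kerop (Ts (fst q))"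
  by (simp add: E_def bvec_ker)

lemma combo_KT:
  assumes rk: "RK Ts k" and v: "valid_coeffs Ts k c"
  shows "combo Ts c \<in> kertuples Ts k"
  unfolding kertuples_def
proof (intro CollectI conjI ballI allI impI)
  fix j assume j: "j \<in> {1..k}"
  have r: "is_redop (Ts j)" using rk j by (simp add: RK_def)
  show "combo Ts c j \<in> kerop (Ts j)"
    unfolding combo_app lsum_def
  proof (rule kerop_sum[OF r])
    fix q show "smult (cr j c q) (E Ts q) \<in> kerop (Ts j)"
      using E_ker[of Ts q] r kerop_smult[OF r] kerop_zero[OF r] by (auto simp: cr_def)
  qed
next
  fix j assume j: "j \<notin> {1..k}"
  show "combo Ts c j = 0"
    unfolding combo_app lsum_def
    by (rule sum.neutral) (use j valid_in[OF v] in \<open>auto simp: cr_def csupp_def\<close>)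
qed

lemma EV:
  assumes rk: "RK Ts k" and v: "valid_coeffs Ts k c" and j: "j \<in> {1..k}" and g: "g \<in> red (Ts j)"
  shows "combo Ts c j g = c (j, g)"
proof -
  have r: "is_redop (Ts j)" using rk j by (simp add: RK_def)
  have "combo Ts c j g = (\<Sum>q\<in>csupp c. cr j c q * E Ts q g)"
    by (simp add: combo_app lsum_def sum_app)
  also have "\<dots> = (\<Sum>q\<in>csupp c. if (j, g) = q then c q else 0)"
    by (rule sum.cong) (auto simp: cr_def E_def bvec_at[OF r g] delta_apply)
  also have "\<dots> = c (j, g)" using valid_fin[OF v] by (simp add: csupp_def)
  finally show ?thesis .
qed

definition cz :: "(nat \<Rightarrow> ('g \<Rightarrow> 'k::field) \<Rightarrow> ('g \<Rightarrow> 'k)) \<Rightarrow> nat \<Rightarrow> (nat \<Rightarrow> 'g \<Rightarrow> 'k) \<Rightarrow> nat \<times> 'g \<Rightarrow> 'k" where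
  "cz Ts k w = (\<lambda>p. if fst p \<in> {1..k} \<and> snd p \<in> red (Ts (fst p)) then w (fst p) (snd p) else 0)"

lemma cz_valid:
  assumes w: "w \<in> kertuples Ts k"
  shows "valid_coeffs Ts k (cz Ts k w)"
proof -
  have "{p. cz Ts k w p \<noteq> 0} \<subseteq> (SIGMA j:{1..k}. supp (w j))"
    by (auto simp: cz_def supp_def split: if_splits)
  moreover have "finite (SIGMA j:{1..k}. supp (w j))"
    using w by (auto simp: kertuples_def kerop_def KG_iff)
  ultimately show ?thesis unfolding valid_coeffs_def
    by (auto simp: cz_def finite_subset split: if_splits)
qed

lemma cz_combo:
  assumes rk: "RK Ts k" and w: "w \<in> kertuples Ts k"
  shows "combo Ts (cz Ts k w) = w"
proof (rule ext)
  fix j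
  let ?c = "cz Ts k w"
  have fin: "finite (csupp ?c)" using valid_fin[OF cz_valid[OF w]] .
  show "combo Ts ?c j = w j"
  proof (cases "j \<in> {1..k}")
    case False
    have "combo Ts ?c j = 0" unfolding combo_app lsum_def
      by (rule sum.neutral) (use False in \<open>auto simp: cr_def cz_def\<close>)
    then show ?thesis using w False by (simp add: kertuples_def)
  next
    case True
    have r: "is_redop (Ts j)" using rk True by (simp add: RK_def)
    have jr: "Suc 0 \<le> j" "j \<le> k" using True by auto
    have wk: "w j \<in> kerop (Ts j)" using w True by (simp add: kertuples_def)
    have cs: "csupp (cr j ?c) = Pair j ` (supp (w j) \<inter> red (Ts j))"
      using True by (auto simp: csupp_def cr_def cz_def supp_def split: if_splits)
    have "combo Ts ?c j = lsum Ts (csupp ?c) (cr j ?c)" by (rule combo_app)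
    also have "\<dots> = lsum Ts (csupp (cr j ?c)) (cr j ?c)"
      by (rule lsum_super[symmetric]) (use fin in \<open>auto simp: csupp_def cr_def\<close>)
    also have "\<dots> = (\<Sum>g\<in>supp (w j) \<inter> red (Ts j). smult (w j g) (bvec (Ts j) g))"
      unfolding cs lsum_def
      by (subst sum.reindex) (auto simp: inj_on_def cr_def cz_def E_def jr intro!: sum.cong)
    also have "\<dots> = w j" by (rule ker_expand[OF r wk, symmetric])
    finally show ?thesis .
  qed
qed

lemma valid_eq_cz:
  assumes rk: "RK Ts k" and v: "valid_coeffs Ts k c"
  shows "c = cz Ts k (combo Ts c)"
proof (rule ext)
  fix p :: "nat \<times> 'a"
  obtain j g where p: "p = (j, g)" by fastforce
  show "c p = cz Ts k (combo Ts c) p"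
  proof (cases "j \<in> {1..k} \<and> g \<in> red (Ts j)")
    case True then show ?thesis using EV[OF rk v, of j g] p by (simp add: cz_def)
  next
    case False then show ?thesis using valid_in[OF v, of p] p by (auto simp: cz_def)
  qed
qed

lemma coeffs_kt:
  assumes rk: "RK Ts k" and w: "w \<in> kertuples Ts k"
  shows "coeffs Ts k w = cz Ts k w"
  unfolding coeffs_def
proof (rule the_equality)
  show "valid_coeffs Ts k (cz Ts k w) \<and> combo Ts (cz Ts k w) = w"
    using cz_valid[OF w] cz_combo[OF rk w] by simp
  fix c assume "valid_coeffs Ts k c \<and> combo Ts c = w"
  then show "c = cz Ts k w" using valid_eq_cz[OF rk] by blast
qed

lemma coeffs_combo:
  assumes rk: "RK Ts k" and v: "valid_coeffs Ts k c"
  shows "coeffs Ts k (combo Ts c) = c"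
  using coeffs_kt[OF rk combo_KT[OF rk v]] valid_eq_cz[OF rk v] by simp

lemma pless_lex: "pless p q \<longleftrightarrow> p < q"
  by (simp add: pless_def less_prod_def')

lemma ltsyz_D:
  assumes rk: "RK Ts k" and p: "p \<in> ltsyz Ts k"
  shows "\<exists>d. valid_coeffs Ts k d \<and> lsum Ts (csupp d) d = 0 \<and> d p \<noteq> 0 \<and> (\<forall>q. d q \<noteq> 0 \<longrightarrow> q \<le> p)"
proof -
  obtain s where s: "s \<in> syz Ts k" "s \<noteq> 0" "is_lead (coeffs Ts k s) p"
    using p by (auto simp: ltsyz_def)
  have kt: "s \<in> kertuples Ts k" using s by (simp add: syz_def)
  let ?d = "coeffs Ts k s"
  have dv: "valid_coeffs Ts k ?d" using coeffs_kt[OF rk kt] cz_valid[OF kt] by simp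
  have dc: "combo Ts ?d = s" using coeffs_kt[OF rk kt] cz_combo[OF rk kt] by simp
  have "lsum Ts (csupp ?d) ?d = (\<Sum>j\<in>{1..k}. s j)" using combo_total[OF dv] dc by simp
  also have "\<dots> = 0" using s by (simp add: syz_def)
  finally have ds: "lsum Ts (csupp ?d) ?d = 0" .
  have lead: "?d p \<noteq> 0" "\<forall>q. ?d q \<noteq> 0 \<longrightarrow> q = p \<or> q < p"
    using s(3) unfolding is_lead_def pless_lex by blast+
  have "\<forall>q. ?d q \<noteq> 0 \<longrightarrow> q \<le> p"
  proof (intro allI impI)
    fix q assume "?d q \<noteq> 0"
    then have "q = p \<or> q < p" using lead by blast
    then show "q \<le> p" by auto
  qed
  then show ?thesis using dv ds lead(1) by blast
qed

lemma ltsyz_I: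
  assumes rk: "RK Ts k" and v: "valid_coeffs Ts k d" and dn: "d \<noteq> 0" and ds: "lsum Ts (csupp d) d = 0"
  shows "Max (csupp d) \<in> ltsyz Ts k"
proof -
  let ?s = "combo Ts d"
  let ?m = "Max (csupp d)"
  have fin: "finite (csupp d)" by (rule valid_fin[OF v])
  have ne: "csupp d \<noteq> {}" using dn by (auto simp: csupp_def fun_eq_iff)
  have m: "?m \<in> csupp d" using fin ne by (rule Max_in)
  have mx: "\<And>q. q \<in> csupp d \<Longrightarrow> q \<le> ?m" using fin by simp
  have syz: "?s \<in> syz Ts k"
    using combo_KT[OF rk v] combo_total[OF v] ds by (simp add: syz_def)
  have mr: "fst ?m \<in> {1..k} \<and> snd ?m \<in> red (Ts (fst ?m))" using valid_in[OF v] m by (simp add: csupp_def)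
  have "?s (fst ?m) (snd ?m) = d ?m" using EV[OF rk v] mr by simp
  then have sn: "?s \<noteq> 0" using m by (auto simp: csupp_def)
  have "is_lead (coeffs Ts k ?s) ?m"
    unfolding coeffs_combo[OF rk v] is_lead_def pless_lex
  proof (intro conjI allI impI)
    show "d ?m \<noteq> 0" using m by (simp add: csupp_def)
    fix q assume "d q \<noteq> 0"
    then have "q \<le> ?m" using mx by (simp add: csupp_def)
    then show "q = ?m \<or> q < ?m" by auto
  qed
  then show ?thesis using syz sn by (auto simp: ltsyz_def)
qed

lemma candec_ex:
  assumes rk: "RK Ts k" and v0: "valid_coeffs Ts k c0"
  shows "\<exists>c. valid_coeffs Ts k c \<and> (\<forall>p. c p \<noteq> 0 \<longrightarrow> p \<notin> ltsyz Ts k) \<and> lsum Ts (csupp c) c = lsum Ts (csupp c0) c0"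
proof -
  have "\<exists>c. valid_coeffs Ts k c \<and> lsum Ts (csupp c) c = lsum Ts (csupp c0) c0 \<and> csupp c \<inter> ltsyz Ts k = {}"
  proof (rule reduce_gen[where P="valid_coeffs Ts k" and R="\<lambda>c' c. lsum Ts (csupp c') c' = lsum Ts (csupp c) c"
        and bad="\<lambda>c. csupp c \<inter> ltsyz Ts k"])
    show "\<And>x. valid_coeffs Ts k x \<Longrightarrow> finite (csupp x \<inter> ltsyz Ts k)" using valid_fin by blast
    show "valid_coeffs Ts k c0" by (rule v0)
  next
    fix c p assume v: "valid_coeffs Ts k c" and p: "p \<in> csupp c \<inter> ltsyz Ts k"
      and mx: "\<forall>q\<in>csupp c \<inter> ltsyz Ts k. q \<le> p"
    obtain d where d: "valid_coeffs Ts k d" "lsum Ts (csupp d) d = 0" "d p \<noteq> 0" "\<forall>q. d q \<noteq> 0 \<longrightarrow> q \<le> p"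
      using ltsyz_D[OF rk] p by blast
    define a where "a = c p / d p"
    define c' where "c' = (\<lambda>q. c q - a * d q)"
    let ?S = "csupp c \<union> csupp d"
    have finS: "finite ?S" using valid_fin[OF v] valid_fin[OF d(1)] by simp
    have sub: "csupp c' \<subseteq> ?S" by (auto simp: c'_def csupp_def)
    have v': "valid_coeffs Ts k c'"
      unfolding valid_coeffs_def
    proof (intro conjI allI impI)
      show "finite {p. c' p \<noteq> 0}" using finite_subset[OF sub finS] by (simp add: csupp_def)
      fix q assume "c' q \<noteq> 0"
      then have "c q \<noteq> 0 \<or> d q \<noteq> 0" by (auto simp: c'_def)
      then show "fst q \<in> {1..k}" "snd q \<in> red (Ts (fst q))"
        using valid_in[OF v, of q] valid_in[OF d(1), of q] by auto
    qed
    have "lsum Ts (csupp c') c' = lsum Ts ?S c'" by (rule lsum_super[OF finS sub])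
    also have "\<dots> = lsum Ts ?S c - smult a (lsum Ts ?S d)"
      unfolding c'_def by (simp add: lsum_diff lsum_mult)
    also have "lsum Ts ?S c = lsum Ts (csupp c) c" by (rule lsum_super[symmetric]) (use finS in auto)
    also have "lsum Ts ?S d = lsum Ts (csupp d) d" by (rule lsum_super[symmetric]) (use finS in auto)
    finally have eq: "lsum Ts (csupp c') c' = lsum Ts (csupp c) c" using d(2) by simp
    have "\<forall>q\<in>csupp c' \<inter> ltsyz Ts k. q < p"
    proof
      fix q assume q: "q \<in> csupp c' \<inter> ltsyz Ts k"
      show "q < p"
      proof (rule ccontr)
        assume "\<not> q < p"
        then consider "q = p" | "p < q" by fastforce
        then show False
        proof cases
          case 1 then show False using q d(3) by (simp add: c'_def a_def csupp_def)
        next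
          case 2
          then have "d q = 0" using d(4) by (metis leD)
          then have "c q \<noteq> 0" using q by (simp add: c'_def csupp_def)
          then have "q \<le> p" using mx q by (simp add: csupp_def)
          then show False using 2 by simp
        qed
      qed
    qed
    then show "\<exists>x'. valid_coeffs Ts k x' \<and> lsum Ts (csupp x') x' = lsum Ts (csupp c) c \<and> (\<forall>q\<in>csupp x' \<inter> ltsyz Ts k. q < p)"
      using v' eq by blast
  qed auto
  then show ?thesis by (auto simp: csupp_def)
qed

lemma candec_uniq:
  assumes rk: "RK Ts k" and v1: "valid_coeffs Ts k c1" and v2: "valid_coeffs Ts k c2"
    and a1: "\<forall>p. c1 p \<noteq> 0 \<longrightarrow> p \<notin> ltsyz Ts k" and a2: "\<forall>p. c2 p \<noteq> 0 \<longrightarrow> p \<notin> ltsyz Ts k"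
    and eq: "lsum Ts (csupp c1) c1 = lsum Ts (csupp c2) c2"
  shows "c1 = c2"
proof (rule ccontr)
  assume ne: "c1 \<noteq> c2"
  define d where "d = (\<lambda>q. c1 q - c2 q)"
  let ?S = "csupp c1 \<union> csupp c2"
  have finS: "finite ?S" using valid_fin[OF v1] valid_fin[OF v2] by simp
  have sub: "csupp d \<subseteq> ?S" by (auto simp: d_def csupp_def)
  have vd: "valid_coeffs Ts k d"
    unfolding valid_coeffs_def
  proof (intro conjI allI impI)
    show "finite {p. d p \<noteq> 0}" using finite_subset[OF sub finS] by (simp add: csupp_def)
    fix q assume "d q \<noteq> 0"
    then have "c1 q \<noteq> 0 \<or> c2 q \<noteq> 0" by (auto simp: d_def)
    then show "fst q \<in> {1..k}" "snd q \<in> red (Ts (fst q))"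
      using valid_in[OF v1, of q] valid_in[OF v2, of q] by auto
  qed
  have "lsum Ts (csupp d) d = lsum Ts ?S d" by (rule lsum_super[OF finS sub])
  also have "\<dots> = lsum Ts ?S c1 - lsum Ts ?S c2" unfolding d_def by (rule lsum_diff)
  also have "lsum Ts ?S c1 = lsum Ts (csupp c1) c1" by (rule lsum_super[symmetric]) (use finS in auto)
  also have "lsum Ts ?S c2 = lsum Ts (csupp c2) c2" by (rule lsum_super[symmetric]) (use finS in auto)
  finally have ds: "lsum Ts (csupp d) d = 0" using eq by simp
  have dn: "d \<noteq> 0" using ne by (auto simp: d_def fun_eq_iff)
  have "Max (csupp d) \<in> ltsyz Ts k" by (rule ltsyz_I[OF rk vd dn ds])
  moreover have "Max (csupp d) \<in> csupp d"
    using dn valid_fin[OF vd] by (intro Max_in) (auto simp: csupp_def fun_eq_iff)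
  ultimately show False
  proof -
    assume m1: "Max (csupp d) \<in> ltsyz Ts k" and m2: "Max (csupp d) \<in> csupp d"
    obtain m where m: "m = Max (csupp d)" by blast
    have "c1 m \<noteq> 0 \<or> c2 m \<noteq> 0" using m2 m by (auto simp: csupp_def d_def)
    then show False using a1 a2 m1 m by blast
  qed
qed

lemma candec_form:
  "(\<Sum>p\<in>{p. c p \<noteq> 0}. smult (c p) (delta (snd p) - Ts (fst p) (delta (snd p)))) = lsum Ts (csupp c) c"
  by (simp add: lsum_def csupp_def E_def bvec_def)

lemma candec_prop:
  assumes rk: "RK Ts k" and v0: "valid_coeffs Ts k c0" and v: "v = lsum Ts (csupp c0) c0"
  shows "valid_coeffs Ts k (candec Ts k v) \<and> (\<forall>p. candec Ts k v p \<noteq> 0 \<longrightarrow> p \<notin> ltsyz Ts k)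
     \<and> v = lsum Ts (csupp (candec Ts k v)) (candec Ts k v)"
proof -
  let ?P = "\<lambda>c. valid_coeffs Ts k c \<and> (\<forall>p. c p \<noteq> 0 \<longrightarrow> p \<notin> ltsyz Ts k) \<and> v = lsum Ts (csupp c) c"
  have "\<exists>!c. ?P c"
  proof -
    obtain c where c: "valid_coeffs Ts k c" "\<forall>p. c p \<noteq> 0 \<longrightarrow> p \<notin> ltsyz Ts k"
       "lsum Ts (csupp c) c = lsum Ts (csupp c0) c0" using candec_ex[OF rk v0] by blast
    have Pc: "?P c" using c v by simp
    have "c' = c" if Pc': "?P c'" for c'
    proof (rule candec_uniq[OF rk])
      show "valid_coeffs Ts k c'" "valid_coeffs Ts k c" using Pc Pc' by blast+
      show "\<forall>p. c' p \<noteq> 0 \<longrightarrow> p \<notin> ltsyz Ts k" "\<forall>p. c p \<noteq> 0 \<longrightarrow> p \<notin> ltsyz Ts k"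
        using Pc Pc' by blast+
      show "lsum Ts (csupp c') c' = lsum Ts (csupp c) c" using Pc Pc' by simp
    qed
    then show ?thesis using Pc by blast
  qed
  then have "?P (THE c. ?P c)" by (rule theI')
  then show ?thesis unfolding candec_def candec_form .
qed

lemma kersum_valid:
  assumes rk: "RK Ts k" and v: "v \<in> kersum Ts k"
  shows "\<exists>c0. valid_coeffs Ts k c0 \<and> v = lsum Ts (csupp c0) c0"
proof -
  obtain w where w: "v = (\<Sum>j\<in>{1..k}. w j)" "\<forall>j\<in>{1..k}. w j \<in> kerop (Ts j)"
    using v by (auto simp: kersum_def)
  define w' where "w' = (\<lambda>j. if j \<in> {1..k} then w j else 0)"
  have kt: "w' \<in> kertuples Ts k" using w(2) by (simp add: kertuples_def w'_def)
  let ?c = "cz Ts k w'"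
  have cv: "valid_coeffs Ts k ?c" by (rule cz_valid[OF kt])
  have "lsum Ts (csupp ?c) ?c = (\<Sum>j\<in>{1..k}. combo Ts ?c j)" by (rule combo_total[OF cv, symmetric])
  also have "\<dots> = (\<Sum>j\<in>{1..k}. w j)" using cz_combo[OF rk kt] by (simp add: w'_def)
  finally have "lsum Ts (csupp ?c) ?c = v" using w(1) by simp
  then show ?thesis using cv by blast
qed


lemma smult_sum: "smult c (sum f A) = (\<Sum>a\<in>A. smult c (f a :: 'g \<Rightarrow> 'k::comm_ring))"
  by (rule ext) (simp add: sum_app sum_distrib_left)

lemma smult_add: "smult c (u + v) = smult c u + smult c (v :: 'g \<Rightarrow> 'k::comm_ring)"
  by (rule ext) (simp add: distrib_left)

lemma kerop_subsp: "is_redop T \<Longrightarrow> subsp (kerop T)"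
  unfolding subsp_def by (auto intro: kerop_zero kerop_add kerop_smult kerop_KG)

lemma subsp_inter: "subsp V \<Longrightarrow> subsp W \<Longrightarrow> subsp (V \<inter> W)"
  unfolding subsp_def by blast

lemma kersum_subsp:
  assumes rk: "RK Ts k"
  shows "subsp (kersum Ts k)"
  unfolding subsp_def
proof (intro conjI ballI allI)
  have r: "\<And>j. j \<in> {1..k} \<Longrightarrow> is_redop (Ts j)" using rk by (simp add: RK_def)
  show "kersum Ts k \<subseteq> KG"
  proof
    fix x assume "x \<in> kersum Ts k"
    then obtain w where "x = (\<Sum>j\<in>{1..k}. w j)" "\<forall>j\<in>{1..k}. w j \<in> kerop (Ts j)"
      by (auto simp: kersum_def)
    then show "x \<in> KG" by (auto intro!: KG_sum simp: kerop_def)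
  qed
  show "0 \<in> kersum Ts k"
  proof -
    have "\<forall>j\<in>{1..k}. (0::'a\<Rightarrow>'b) \<in> kerop (Ts j)" using r kerop_zero by blast
    then show ?thesis unfolding kersum_def by force
  qed
  fix u v assume "u \<in> kersum Ts k" "v \<in> kersum Ts k"
  then obtain w1 w2 where w: "u = (\<Sum>j\<in>{1..k}. w1 j)" "\<forall>j\<in>{1..k}. w1 j \<in> kerop (Ts j)"
      "v = (\<Sum>j\<in>{1..k}. w2 j)" "\<forall>j\<in>{1..k}. w2 j \<in> kerop (Ts j)"
    by (auto simp: kersum_def)
  have "u + v = (\<Sum>j\<in>{1..k}. w1 j + w2 j)" using w by (simp add: sum.distrib)
  moreover have "\<forall>j\<in>{1..k}. w1 j + w2 j \<in> kerop (Ts j)" using w r kerop_add by blast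
  ultimately show "u + v \<in> kersum Ts k" unfolding kersum_def by blast
next
  have r: "\<And>j. j \<in> {1..k} \<Longrightarrow> is_redop (Ts j)" using rk by (simp add: RK_def)
  fix c v assume "v \<in> kersum Ts k"
  then obtain w where w: "v = (\<Sum>j\<in>{1..k}. w j)" "\<forall>j\<in>{1..k}. w j \<in> kerop (Ts j)"
    by (auto simp: kersum_def)
  have "smult c v = (\<Sum>j\<in>{1..k}. smult c (w j))" using w by (simp add: smult_sum)
  moreover have "\<forall>j\<in>{1..k}. smult c (w j) \<in> kerop (Ts j)" using w r kerop_smult by blast
  ultimately show "smult c v \<in> kersum Ts k" unfolding kersum_def by blast
qed

lemma tdec_prop:
  assumes r: "is_redop T" and v: "v \<in> kerop T"
  shows "finite {g. tdec T v g \<noteq> 0} \<and> (\<forall>g. tdec T v g \<noteq> 0 \<longrightarrow> g \<in> red T) \<and>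
      v = (\<Sum>g\<in>{g. tdec T v g \<noteq> 0}. smult (tdec T v g) (bvec T g))"
proof -
  let ?P = "\<lambda>l. finite {g. l g \<noteq> 0} \<and> (\<forall>g. l g \<noteq> 0 \<longrightarrow> g \<in> red T) \<and>
      v = (\<Sum>g\<in>{g. l g \<noteq> 0}. smult (l g) (bvec T g))"
  define l0 where "l0 = (\<lambda>g. if g \<in> red T then v g else 0)"
  have vK: "v \<in> KG" using v by (simp add: kerop_def)
  have s: "{g. l0 g \<noteq> 0} = supp v \<inter> red T" by (auto simp: l0_def supp_def)
  have fin: "finite (supp v \<inter> red T)" using vK by (simp add: KG_iff)
  have nz: "\<forall>g. l0 g \<noteq> 0 \<longrightarrow> g \<in> red T" by (simp add: l0_def)
  have eq: "(\<Sum>g\<in>supp v \<inter> red T. smult (l0 g) (bvec T g)) = (\<Sum>g\<in>supp v \<inter> red T. smult (v g) (bvec T g))"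
    by (rule sum.cong) (auto simp: l0_def)
  have P0: "?P l0" unfolding s using fin nz eq ker_expand[OF r v] by simp
  have u: "l = l0" if Pl: "?P l" for l
  proof (rule ext)
    fix h show "l h = l0 h"
    proof (cases "h \<in> red T")
      case True
      have fl: "finite {g. l g \<noteq> 0}" using Pl by blast
      have ve: "v = (\<Sum>g\<in>{g. l g \<noteq> 0}. smult (l g) (bvec T g))" using Pl by blast
      have "v h = (\<Sum>g\<in>{g. l g \<noteq> 0}. smult (l g) (bvec T g)) h" using ve by (rule fun_cong)
      also have "\<dots> = (if h \<in> {g. l g \<noteq> 0} then l h else 0)" by (rule EVT[OF r fl True])
      also have "\<dots> = l h" by simp
      finally show ?thesis using True by (simp add: l0_def)
    next
      case False
      have "\<forall>g. l g \<noteq> 0 \<longrightarrow> g \<in> red T" using Pl by blast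
      then show ?thesis using False by (auto simp: l0_def)
    qed
  qed
  have "?P (THE l. ?P l)" by (rule theI[of ?P l0, OF P0 u])
  then show ?thesis unfolding tdec_def bvec_def .
qed

context
  fixes Ts :: "nat \<Rightarrow> ('g::wellorder \<Rightarrow> 'k::field) \<Rightarrow> ('g \<Rightarrow> 'k)" and i :: nat
  assumes rk: "RK Ts i" and i2: "2 \<le> i"
begin

lemma rk1: "RK Ts (i - 1)" using rk by (auto simp: RK_def)
lemma ri: "is_redop (Ts i)" using rk i2 by (auto simp: RK_def)

definition UU where "UU = nfop (joinker Ts i)"

lemma J_subsp: "subsp (joinker Ts i)"
  unfolding joinker_def by (rule subsp_inter[OF kersum_subsp[OF rk1] kerop_subsp[OF ri]])

lemma UU_redop: "is_redop UU" unfolding UU_def by (rule nfop_redop[OF J_subsp])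
lemma UU_ker: "kerop UU = joinker Ts i" unfolding UU_def by (rule nfop_ker[OF J_subsp])

lemma vvec_eq: "vvec Ts i g = bvec UU g"
  by (simp add: vvec_def bvec_def kerinv_at_eq[OF UU_redop UU_ker])

lemma kred_eq: "kerinv_red (joinker Ts i) = red UU"
  by (rule kerinv_red_eq[OF UU_redop UU_ker])

lemma svec_prop:
  assumes g0: "g0 \<in> red UU"
  shows "svec Ts i g0 \<in> syz Ts i \<and> svec Ts i g0 i = bvec UU g0"
proof -
  let ?v = "bvec UU g0"
  have vJ: "?v \<in> joinker Ts i" using bvec_ker[OF UU_redop] UU_ker by simp
  have vi: "?v \<in> kerop (Ts i)" and vs: "?v \<in> kersum Ts (i - 1)" using vJ by (auto simp: joinker_def)
  define l where "l = tdec (Ts i) ?v"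
  have l: "finite {g. l g \<noteq> 0}" "\<forall>g. l g \<noteq> 0 \<longrightarrow> g \<in> red (Ts i)"
      "?v = (\<Sum>g\<in>{g. l g \<noteq> 0}. smult (l g) (bvec (Ts i) g))"
    using tdec_prop[OF ri vi] unfolding l_def by blast+
  obtain c0 where c0: "valid_coeffs Ts (i - 1) c0" "?v = lsum Ts (csupp c0) c0"
    using kersum_valid[OF rk1 vs] by blast
  define m where "m = candec Ts (i - 1) ?v"
  have m: "valid_coeffs Ts (i - 1) m" "?v = lsum Ts (csupp m) m"
    using candec_prop[OF rk1 c0] unfolding m_def by blast+
  have m0: "m q = 0" if "fst q = i" for q using valid_in[OF m(1), of q] that i2 by (cases "m q = 0") auto
  define cs where "cs = (\<lambda>p. if fst p = i then l (snd p) else - m p)"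
  define cl where "cl = (\<lambda>p::nat \<times> 'g. if fst p = i then l (snd p) else 0)"
  have sv: "svec Ts i g0 = combo Ts cs"
    unfolding svec_def Let_def vvec_eq cs_def l_def m_def by (rule refl)
  have csub: "csupp cs \<subseteq> Pair i ` {g. l g \<noteq> 0} \<union> csupp m"
  proof
    fix q assume q: "q \<in> csupp cs"
    show "q \<in> Pair i ` {g. l g \<noteq> 0} \<union> csupp m"
    proof (cases "fst q = i")
      case True
      then have "q = Pair i (snd q)" "l (snd q) \<noteq> 0" using q by (auto simp: cs_def csupp_def prod_eq_iff)
      then show ?thesis by blast
    next
      case False then show ?thesis using q by (simp add: cs_def csupp_def)
    qed
  qed
  have finS: "finite (Pair i ` {g. l g \<noteq> 0} \<union> csupp m)" using l(1) valid_fin[OF m(1)] by simp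
  have inr: "fst q \<in> {1..i} \<and> snd q \<in> red (Ts (fst q))" if q: "cs q \<noteq> 0" for q
  proof (cases "fst q = i")
    case True
    then show ?thesis using q l(2) i2 by (auto simp: cs_def)
  next
    case False
    then have "m q \<noteq> 0" using q by (simp add: cs_def)
    then show ?thesis using valid_in[OF m(1), of q] by auto
  qed
  have vcs: "valid_coeffs Ts i cs"
    unfolding valid_coeffs_def using inr finite_subset[OF csub finS] by (simp add: csupp_def)
  have kt: "combo Ts cs \<in> kertuples Ts i" by (rule combo_KT[OF rk vcs])
  have crl: "cr i cs = cl" by (rule ext) (simp add: cr_def cs_def cl_def)
  have csl: "csupp cl = Pair i ` {g. l g \<noteq> 0}" by (auto simp: csupp_def cl_def)
  have clsub: "csupp cl \<subseteq> csupp cs" by (auto simp: csupp_def cl_def cs_def)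
  have finc: "finite (csupp cs)" by (rule valid_fin[OF vcs])
  have lcl: "lsum Ts (csupp cl) cl = ?v"
    unfolding csl lsum_def l(3)
    by (subst sum.reindex) (auto simp: inj_on_def cl_def E_def)
  have comp_i: "combo Ts cs i = ?v"
  proof -
    have "combo Ts cs i = lsum Ts (csupp cs) cl" by (simp add: combo_app crl)
    also have "\<dots> = lsum Ts (csupp cl) cl" by (rule lsum_super[symmetric, OF finc clsub])
    finally show ?thesis using lcl by simp
  qed
  have tot: "(\<Sum>j\<in>{1..i}. combo Ts cs j) = 0"
  proof -
    let ?S = "csupp cs \<union> csupp m"
    have fS: "finite ?S" using finc valid_fin[OF m(1)] by simp
    have cseq: "cs = (\<lambda>q. cl q - m q)"
      by (rule ext) (simp add: cs_def cl_def m0)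
    have "(\<Sum>j\<in>{1..i}. combo Ts cs j) = lsum Ts (csupp cs) cs" by (rule combo_total[OF vcs])
    also have "\<dots> = lsum Ts ?S cs" by (rule lsum_super) (use fS in auto)
    also have "\<dots> = lsum Ts ?S cl - lsum Ts ?S m" by (subst cseq, rule lsum_diff)
    also have "lsum Ts ?S cl = lsum Ts (csupp cl) cl" by (rule lsum_super[symmetric]) (use fS clsub in auto)
    also have "lsum Ts ?S m = lsum Ts (csupp m) m" by (rule lsum_super[symmetric]) (use fS in auto)
    finally show ?thesis using lcl m(2) by simp
  qed
  show ?thesis unfolding sv syz_def using kt tot comp_i by simp
qed

end


lemma tsmult_app: "tsmult c w j = smult c (w j)" by (simp add: tsmult_def)

lemma smult_zero_right[simp]: "smult c 0 = (0 :: 'g \<Rightarrow> 'k::mult_zero)"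
  by (rule ext) simp

lemma syz_zero: "RK Ts k \<Longrightarrow> 0 \<in> syz Ts k"
  by (auto simp: syz_def kertuples_def RK_def intro: kerop_zero)

lemma syz_add:
  assumes rk: "RK Ts k" and u: "u \<in> syz Ts k" and v: "v \<in> syz Ts k"
  shows "u + v \<in> syz Ts k"
proof -
  have "(\<Sum>j\<in>{1..k}. (u + v) j) = (\<Sum>j\<in>{1..k}. u j) + (\<Sum>j\<in>{1..k}. v j)"
    by (simp add: sum.distrib)
  then show ?thesis using u v rk
    by (auto simp: syz_def kertuples_def RK_def intro: kerop_add)
qed

lemma syz_tsmult:
  assumes rk: "RK Ts k" and w: "w \<in> syz Ts k"
  shows "tsmult c w \<in> syz Ts k"
proof -
  have "(\<Sum>j\<in>{1..k}. tsmult c w j) = smult c (\<Sum>j\<in>{1..k}. w j)"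
    by (simp add: tsmult_app smult_sum)
  also have "\<dots> = 0" using w by (simp add: syz_def)
  finally show ?thesis using w rk
    by (auto simp: syz_def kertuples_def RK_def tsmult_app intro: kerop_smult)
qed

lemma syz_diff:
  assumes rk: "RK Ts k" and u: "u \<in> syz Ts k" and v: "v \<in> syz Ts k"
  shows "u - v \<in> syz Ts k"
proof -
  have "(\<Sum>j\<in>{1..k}. (u - v) j) = (\<Sum>j\<in>{1..k}. u j) - (\<Sum>j\<in>{1..k}. v j)"
    by (simp add: sum_subtractf)
  then show ?thesis using u v rk
    by (auto simp: syz_def kertuples_def RK_def intro: kerop_diff)
qed

lemma syz_sum:
  assumes rk: "RK Ts k"
  shows "(\<And>a. a \<in> A \<Longrightarrow> f a \<in> syz Ts k) \<Longrightarrow> sum f A \<in> syz Ts k"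
  by (induction A rule: infinite_finite_induct) (auto intro: syz_add[OF rk] syz_zero[OF rk])

lemma syz_up:
  assumes rk: "RK Ts (Suc m)" and w: "w \<in> syz Ts m"
  shows "w \<in> syz Ts (Suc m)"
proof -
  have r: "is_redop (Ts (Suc m))" using rk by (simp add: RK_def)
  have w0: "w (Suc m) = 0" using w by (simp add: syz_def kertuples_def)
  have e: "{1..Suc m} = insert (Suc m) {1..m}" by (rule atLeastAtMostSuc_conv) simp
  show ?thesis using w w0 kerop_zero[OF r] unfolding syz_def kertuples_def e
    by auto
qed

lemma syz_down:
  assumes w: "w \<in> syz Ts (Suc m)" and w0: "w (Suc m) = 0"
  shows "w \<in> syz Ts m"
proof -
  have e: "{1..Suc m} = insert (Suc m) {1..m}" by (rule atLeastAtMostSuc_conv) simp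
  show ?thesis using w w0 unfolding syz_def kertuples_def e
    by auto metis
qed

theorem mainTheorem5:
  fixes Ts :: "nat \<Rightarrow> ('g::wellorder \<Rightarrow> 'k::field) \<Rightarrow> ('g \<Rightarrow> 'k)" and n i :: nat
  assumes "\<forall>j\<in>{1..n}. is_redop (Ts j)"
    and "2 \<le> i" and "i \<le> n"
  shows "syz Ts i = {a + b | a b. a \<in> syz Ts (i - 1) \<and>
                        b \<in> tspan (svec Ts i ` kerinv_red (joinker Ts i))}
         \<and> syz Ts (i - 1) \<inter> tspan (svec Ts i ` kerinv_red (joinker Ts i)) = {0}"
proof -
  have rk: "RK Ts i" using assms by (auto simp: RK_def)
  have i2: "2 \<le> i" by (rule assms(2))
  obtain m where im: "i = Suc m" using i2 by (cases i) auto
  have im1: "i - 1 = m" using im by simp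
  have rk1: "RK Ts m" using rk1[OF rk i2] im1 by simp
  define U where "U = UU Ts i"
  have Ur: "is_redop U" unfolding U_def by (rule UU_redop[OF rk i2])
  have UK: "kerop U = joinker Ts i" unfolding U_def by (rule UU_ker[OF rk i2])
  let ?R = "red U"
  let ?sv = "svec Ts i"
  have kred: "kerinv_red (joinker Ts i) = ?R" unfolding U_def by (rule kred_eq[OF rk i2])
  have svp: "?sv g \<in> syz Ts i \<and> ?sv g i = bvec U g" if "g \<in> ?R" for g
    using svec_prop[OF rk i2] that unfolding U_def by blast
  have inj: "inj_on ?sv ?R"
  proof (rule inj_onI)
    fix g g' assume g: "g \<in> ?R" and g': "g' \<in> ?R" and e: "?sv g = ?sv g'"
    have "bvec U g = bvec U g'" using svp[OF g] svp[OF g'] e by metis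
    then have "bvec U g g = bvec U g' g" by simp
    then have "(1::'k) = delta g' g" using bvec_self[OF Ur g] bvec_at[OF Ur g] by simp
    then show "g = g'" by (auto simp: delta_apply split: if_splits)
  qed
  have comp: "(\<Sum>g\<in>B. tsmult (c g) (?sv g)) i = (\<Sum>g\<in>B. smult (c g) (bvec U g))" if "B \<subseteq> ?R" for B c
  proof -
    have "(\<Sum>g\<in>B. tsmult (c g) (?sv g)) i = (\<Sum>g\<in>B. smult (c g) (?sv g i))"
      by (simp only: sum_app tsmult_app)
    also have "\<dots> = (\<Sum>g\<in>B. smult (c g) (bvec U g))"
      by (rule sum.cong) (use svp that in auto)
    finally show ?thesis .
  qed
  have tsp: "x \<in> syz Ts i" if xt: "x \<in> tspan (?sv ` ?R)" for x
  proof -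
    obtain A c where x: "x = (\<Sum>y\<in>A. tsmult (c y) y)" "A \<subseteq> ?sv ` ?R"
      using xt by (auto simp: tspan_def)
    have "\<And>y. y \<in> A \<Longrightarrow> tsmult (c y) y \<in> syz Ts i"
      using x(2) svp syz_tsmult[OF rk] by blast
    then show ?thesis unfolding x(1) by (rule syz_sum[OF rk])
  qed
  have part1: "syz Ts i \<subseteq> {a + b | a b. a \<in> syz Ts (i - 1) \<and> b \<in> tspan (?sv ` ?R)}"
  proof
    fix w assume w: "w \<in> syz Ts i"
    let ?wi = "w i"
    have wik: "?wi \<in> kerop (Ts i)" using w i2 by (auto simp: syz_def kertuples_def)
    have "(\<Sum>j\<in>{1..i}. w j) = 0" using w by (simp add: syz_def)
    moreover have e: "{1..i} = insert i {1..m}" unfolding im by (rule atLeastAtMostSuc_conv) simp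
    ultimately have "?wi + (\<Sum>j\<in>{1..m}. w j) = 0" using im by (simp add: add.commute)
    then have wis: "?wi = (\<Sum>j\<in>{1..m}. - w j)" by (simp add: sum_negf eq_neg_iff_add_eq_0)
    have "\<forall>j\<in>{1..m}. - w j \<in> kerop (Ts j)"
      using w rk1 im by (auto simp: syz_def kertuples_def RK_def intro: kerop_uminus)
    then have "?wi \<in> kersum Ts (i - 1)" unfolding kersum_def im1 using wis by blast
    then have wJ: "?wi \<in> kerop U" using wik UK by (simp add: joinker_def)
    define A where "A = supp ?wi \<inter> ?R"
    have finA: "finite A" using wJ by (auto simp: A_def kerop_def KG_iff)
    have wex: "?wi = (\<Sum>g\<in>A. smult (?wi g) (bvec U g))" unfolding A_def by (rule ker_expand[OF Ur wJ])
    define b where "b = (\<Sum>g\<in>A. tsmult (?wi g) (?sv g))"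
    have AR: "A \<subseteq> ?R" by (simp add: A_def)
    have bsyz: "b \<in> syz Ts i" unfolding b_def
      by (rule syz_sum[OF rk], rule syz_tsmult[OF rk]) (use svp AR in blast)
    have bi: "b i = ?wi" unfolding b_def comp[OF AR] using wex by simp
    have bsp: "b \<in> tspan (?sv ` ?R)"
    proof -
      define c where "c = (\<lambda>x. ?wi (inv_into A ?sv x))"
      have injA: "inj_on ?sv A" using inj AR by (rule inj_on_subset)
      have "(\<Sum>x\<in>?sv ` A. tsmult (c x) x) = (\<Sum>g\<in>A. tsmult (c (?sv g)) (?sv g))"
        by (simp add: sum.reindex[OF injA])
      also have "\<dots> = b" unfolding b_def c_def using injA by (auto intro!: sum.cong)
      finally have "b = (\<Sum>x\<in>?sv ` A. tsmult (c x) x)" by simp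
      moreover have "finite (?sv ` A)" "?sv ` A \<subseteq> ?sv ` ?R" using finA AR by auto
      ultimately show ?thesis unfolding tspan_def by blast
    qed
    define a where "a = w - b"
    have asyz: "a \<in> syz Ts i" unfolding a_def by (rule syz_diff[OF rk w bsyz])
    have "a i = 0" using bi by (simp add: a_def)
    then have "a \<in> syz Ts (i - 1)" using asyz syz_down[of a Ts m] im by simp
    moreover have "w = a + b" by (simp add: a_def)
    ultimately show "w \<in> {a + b | a b. a \<in> syz Ts (i - 1) \<and> b \<in> tspan (?sv ` ?R)}" using bsp by blast
  qed
  have part2: "{a + b | a b. a \<in> syz Ts (i - 1) \<and> b \<in> tspan (?sv ` ?R)} \<subseteq> syz Ts i"
  proof
    fix x assume "x \<in> {a + b | a b. a \<in> syz Ts (i - 1) \<and> b \<in> tspan (?sv ` ?R)}"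
    then obtain a b where x: "x = a + b" "a \<in> syz Ts (i - 1)" "b \<in> tspan (?sv ` ?R)" by blast
    have "a \<in> syz Ts i" using syz_up[of Ts m a] rk x(2) im by simp
    moreover have "b \<in> syz Ts i" using tsp x(3) by blast
    ultimately show "x \<in> syz Ts i" unfolding x(1) by (rule syz_add[OF rk])
  qed
  have part3: "syz Ts (i - 1) \<inter> tspan (?sv ` ?R) \<subseteq> {0}"
  proof
    fix x assume x: "x \<in> syz Ts (i - 1) \<inter> tspan (?sv ` ?R)"
    obtain A c where xA: "x = (\<Sum>y\<in>A. tsmult (c y) y)" "finite A" "A \<subseteq> ?sv ` ?R"
      using x by (auto simp: tspan_def)
    obtain B where B: "B \<subseteq> ?R" "finite B" "A = ?sv ` B"
      using finite_subset_image[OF xA(2) xA(3)] by blast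
    have injB: "inj_on ?sv B" using inj B(1) by (rule inj_on_subset)
    have xB: "x = (\<Sum>g\<in>B. tsmult (c (?sv g)) (?sv g))"
      unfolding xA(1) B(3) by (simp add: sum.reindex[OF injB])
    have xi: "x i = 0" using x im by (auto simp: syz_def kertuples_def)
    have cz: "c (?sv h) = 0" if h: "h \<in> B" for h
    proof -
      have hR: "h \<in> ?R" using h B(1) by blast
      have "0 = x i h" using xi by simp
      also have "\<dots> = (\<Sum>g\<in>B. smult (c (?sv g)) (bvec U g)) h" unfolding xB comp[OF B(1)] by simp
      also have "\<dots> = c (?sv h)" using EVT[OF Ur B(2) hR] h by simp
      finally show ?thesis by simp
    qed
    have "x = 0" unfolding xB by (rule sum.neutral) (use cz in \<open>auto simp: tsmult_def\<close>)
    then show "x \<in> {0}" by simp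
  qed
  have z1: "0 \<in> syz Ts (i - 1)" using syz_zero[OF rk1] im1 by simp
  have z2: "0 \<in> tspan (?sv ` ?R)" unfolding tspan_def
    by (rule CollectI, rule exI[of _ "{}"], rule exI[of _ "\<lambda>x. 0"]) simp
  show ?thesis unfolding kred using part1 part2 part3 z1 z2 by blast
qed

end
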